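(* Let $B(y)=|h(y)-(1-V)|$ be randomized response with $h:\mathbb Y\to\{0,1\}$, $V\sim\mathrm{Bern}(\theta)$, $\theta\in[0,1]$, and let $S$ be subsampling without replacement with batch size $q$. Then for all $\alpha>1$ and all datasets $x\simeq_\Delta x'$ of size $N$, $$\Lambda_\alpha(m_x\|m_{x'})\le\max_{\tau\in\{\theta,1-\theta\}}\Lambda_\alpha\big((1-w)\mathrm{Bern}(\cdot\mid\theta)+w\,\mathrm{Bern}(\cdot\mid\tau)\ \big\|\ (1-w)\mathrm{Bern}(\cdot\mid\theta)+w\,\mathrm{Bern}(\cdot\mid1-\tau)\big),$$ with $w=q/N$.
   Context: Datasets are finite sets with more than $q$ elements; batches are subsets of size $q$; subsampling without replacement: $s_x(y)=\binom{|x|}{q}^{-1}$ for $y\subseteq x$, $|y|=q$. $b_y$ is the pmf of $B(y)$ on $\{0,1\}$ and $m_x=\sum_y b_y s_x(y)$. $\mathrm{Bern}(\cdot\mid p)$ is the pmf on $\{0,1\}$ with mass $p$ at $1$. $x\simeq_\Delta x'$ iff $x'=(x\setminus\{a\})\cup\{a'\}$ with $a\in x$, $a'\notin x$. $\Lambda_\alpha(p\|q)=\sum_{z\in\{0,1\}}p(z)^\alpha q(z)^{1-\alpha}$. *)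

theory Defs
  imports "HOL-Analysis.Analysis"
begin

text \<open>Outputs live in {0,1}, represented as integers; a pmf on {0,1} is a function int => real.\<close>

definition Bern :: "real \<Rightarrow> int \<Rightarrow> real" where
  "Bern p z = (if z = 1 then p else if z = 0 then 1 - p else 0)"

definition batches :: "nat \<Rightarrow> 'a set \<Rightarrow> 'a set set" where
  "batches q x = {y. y \<subseteq> x \<and> card y = q}"

definition subsample :: "nat \<Rightarrow> 'a set \<Rightarrow> 'a set \<Rightarrow> real" where
  "subsample q x y = (if y \<in> batches q x then 1 / real (card x choose q) else 0)"

definition rr_pmf :: "real \<Rightarrow> ('a set \<Rightarrow> int) \<Rightarrow> 'a set \<Rightarrow> int \<Rightarrow> real" where
  "rr_pmf \<theta> h y z =
     \<theta> * (if \<bar>h y - (1 - 1)\<bar> = z then 1 else 0)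
   + (1 - \<theta>) * (if \<bar>h y - (1 - 0)\<bar> = z then 1 else 0)"

definition mix_pmf :: "nat \<Rightarrow> real \<Rightarrow> ('a set \<Rightarrow> int) \<Rightarrow> 'a set \<Rightarrow> int \<Rightarrow> real" where
  "mix_pmf q \<theta> h x z = (\<Sum>y\<in>batches q x. rr_pmf \<theta> h y z * subsample q x y)"

definition renyi_term :: "real \<Rightarrow> real \<Rightarrow> real \<Rightarrow> ereal" where
  "renyi_term \<alpha> p r = (if p = 0 then 0 else if r = 0 then \<infinity>
                          else ereal (p powr \<alpha> * r powr (1 - \<alpha>)))"

definition Lambda :: "real \<Rightarrow> (int \<Rightarrow> real) \<Rightarrow> (int \<Rightarrow> real) \<Rightarrow> ereal" where
  "Lambda \<alpha> P Q = (\<Sum>z\<in>{0::int, 1}. renyi_term \<alpha> (P z) (Q z))"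

definition subst_rel :: "'a set \<Rightarrow> 'a set \<Rightarrow> bool" where
  "subst_rel x x' = (\<exists>a a'. a \<in> x \<and> a' \<notin> x \<and> x' = (x - {a}) \<union> {a'})"

end

theory Submission imports Defs begin

definition phi :: "real \<Rightarrow> real \<Rightarrow> real \<Rightarrow> real" where
  "phi \<alpha> p r = p powr \<alpha> * r powr (1 - \<alpha>)"

definition GG :: "real \<Rightarrow> real \<Rightarrow> real \<Rightarrow> real" where
  "GG \<alpha> p r = phi \<alpha> p r + phi \<alpha> (1 - p) (1 - r)"

lemma phi_alt: "r > 0 \<Longrightarrow> p \<ge> 0 \<Longrightarrow> phi \<alpha> p r = r * (p / r) powr \<alpha>"
  unfolding phi_def by (simp add: powr_divide powr_diff)

lemma phi_persp:
  assumes a: "\<alpha> \<ge> 1" and p: "p0 > 0" "p1 > 0" and r: "r0 > 0" "r1 > 0" and t: "0 \<le> t" "t \<le> 1"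
  shows "phi \<alpha> ((1-t)*p0 + t*p1) ((1-t)*r0 + t*r1) \<le> (1-t) * phi \<alpha> p0 r0 + t * phi \<alpha> p1 r1"
proof -
  define R where "R = (1-t)*r0 + t*r1"
  have R: "R > 0" unfolding R_def using r t
    by (smt (verit) mult_nonneg_nonneg mult_pos_pos)
  define \<mu> where "\<mu> = t*r1 / R"
  have mu0: "\<mu> \<ge> 0" unfolding \<mu>_def using R r t by simp
  have mu1: "\<mu> \<le> 1" unfolding \<mu>_def using R r t R_def
    by (simp add: divide_le_eq_1)
  have omu: "1 - \<mu> = (1-t)*r0 / R" unfolding \<mu>_def using R R_def by (simp add: field_simps)
  have eq: "((1-t)*p0 + t*p1) / R = (1-\<mu>) * (p0/r0) + \<mu> * (p1/r1)"
    unfolding omu unfolding \<mu>_def using R r by (simp add: field_simps)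
  have cv: "((1-\<mu>) * (p0/r0) + \<mu> * (p1/r1)) powr \<alpha> \<le> (1-\<mu>) * (p0/r0) powr \<alpha> + \<mu> * (p1/r1) powr \<alpha>"
    using convex_onD[OF powr_convex[OF a], of \<mu> "p0/r0" "p1/r1"] mu0 mu1 p r by simp
  have nn: "(1-t)*p0 + t*p1 \<ge> 0" using p t by simp
  have "phi \<alpha> ((1-t)*p0 + t*p1) R = R * (((1-\<mu>) * (p0/r0) + \<mu> * (p1/r1)) powr \<alpha>)"
    using phi_alt[OF R nn] eq by simp
  also have "\<dots> \<le> R * ((1-\<mu>) * (p0/r0) powr \<alpha> + \<mu> * (p1/r1) powr \<alpha>)"
    using cv R by (simp add: mult_left_mono)
  also have "\<dots> = (1-t) * (r0 * (p0/r0) powr \<alpha>) + t * (r1 * (p1/r1) powr \<alpha>)"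
    unfolding omu using R by (simp add: \<mu>_def field_simps)
  also have "\<dots> = (1-t) * phi \<alpha> p0 r0 + t * phi \<alpha> p1 r1"
    using phi_alt[of r0 p0] phi_alt[of r1 p1] p r by simp
  finally show ?thesis unfolding R_def .
qed

lemma GG_conv:
  assumes a: "\<alpha> \<ge> 1" and p: "0 < p0" "p0 < 1" "0 < p1" "p1 < 1"
    and r: "0 < r0" "r0 < 1" "0 < r1" "r1 < 1" and t: "0 \<le> t" "t \<le> 1"
  shows "GG \<alpha> ((1-t)*p0 + t*p1) ((1-t)*r0 + t*r1) \<le> (1-t) * GG \<alpha> p0 r0 + t * GG \<alpha> p1 r1"
proof -
  have e1: "1 - ((1-t)*p0 + t*p1) = (1-t)*(1-p0) + t*(1-p1)" by (simp add: algebra_simps)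
  have e2: "1 - ((1-t)*r0 + t*r1) = (1-t)*(1-r0) + t*(1-r1)" by (simp add: algebra_simps)
  show ?thesis unfolding GG_def e1 e2
    using phi_persp[OF a p(1,3) r(1,3) t] phi_persp[of \<alpha> "1-p0" "1-p1" "1-r0" "1-r1" t] a p r t
    by (simp add: algebra_simps)
qed

lemma GG_line:
  assumes a: "\<alpha> \<ge> 1" and p: "0 < p0" "p0 < 1" "0 < p1" "p1 < 1"
    and r: "0 < r0" "r0 < 1" "0 < r1" "r1 < 1" and t: "0 \<le> t" "t \<le> 1"
  shows "GG \<alpha> ((1-t)*p0 + t*p1) ((1-t)*r0 + t*r1) \<le> max (GG \<alpha> p0 r0) (GG \<alpha> p1 r1)"
proof -
  have "(1-t) * GG \<alpha> p0 r0 + t * GG \<alpha> p1 r1 \<le> (1-t) * max (GG \<alpha> p0 r0) (GG \<alpha> p1 r1) + t * max (GG \<alpha> p0 r0) (GG \<alpha> p1 r1)"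
    using t by (intro add_mono mult_left_mono) auto
  then show ?thesis using GG_conv[OF assms] by (simp add: algebra_simps)
qed

lemma GG_diag: "0 < p \<Longrightarrow> p < 1 \<Longrightarrow> GG \<alpha> p p = 1"
  unfolding GG_def phi_def by (simp add: powr_add[symmetric])

lemma GG_ge1:
  assumes a: "\<alpha> \<ge> 1" and p: "0 < p" "p < 1" and r: "0 < r" "r < 1"
  shows "GG \<alpha> p r \<ge> 1"
proof -
  have c: "((1-(1-r)) * (p/r) + (1-r) * ((1-p)/(1-r))) powr \<alpha> \<le> (1-(1-r)) * (p/r) powr \<alpha> + (1-r) * ((1-p)/(1-r)) powr \<alpha>"
    using convex_onD[OF powr_convex[OF a], of "1-r" "p/r" "(1-p)/(1-r)"] p r by simp
  have e: "(1-(1-r)) * (p/r) + (1-r) * ((1-p)/(1-r)) = 1" using r by (simp add: field_simps)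
  show ?thesis using c unfolding e GG_def using phi_alt[of r p \<alpha>] phi_alt[of "1-r" "1-p" \<alpha>] p r by simp
qed


definition vv :: "real \<Rightarrow> real \<Rightarrow> real" where "vv \<theta> t = (1-t)*\<theta> + t*(1-\<theta>)"
definition PP :: "real \<Rightarrow> real \<Rightarrow> real \<Rightarrow> real \<Rightarrow> real" where
  "PP \<theta> w a b = (1-w) * vv \<theta> a + w * vv \<theta> b"

lemma PP_lin1: "PP \<theta> w a b = (1-a) * PP \<theta> w 0 b + a * PP \<theta> w 1 b"
  unfolding PP_def vv_def by (simp add: algebra_simps)
lemma PP_lin2: "PP \<theta> w a b = (1-b) * PP \<theta> w a 0 + b * PP \<theta> w a 1"
  unfolding PP_def vv_def by (simp add: algebra_simps)
lemma const_lin: "(x::real) = (1-t)*x + t*x" by (simp add: algebra_simps)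

lemma vv_range: "0 < \<theta> \<Longrightarrow> \<theta> < 1 \<Longrightarrow> 0 \<le> t \<Longrightarrow> t \<le> 1 \<Longrightarrow> 0 < vv \<theta> t \<and> vv \<theta> t < 1"
proof -
  assume h: "0 < \<theta>" "\<theta> < 1" "0 \<le> t" "t \<le> 1"
  have "min \<theta> (1-\<theta>) \<le> vv \<theta> t" "vv \<theta> t \<le> max \<theta> (1-\<theta>)"
  proof -
    have "(1-t)*\<theta> \<ge> (1-t)*min \<theta> (1-\<theta>)" "t*(1-\<theta>) \<ge> t*min \<theta> (1-\<theta>)"
         "(1-t)*\<theta> \<le> (1-t)*max \<theta> (1-\<theta>)" "t*(1-\<theta>) \<le> t*max \<theta> (1-\<theta>)"
      using h by (auto intro!: mult_left_mono)
    then show "min \<theta> (1-\<theta>) \<le> vv \<theta> t" "vv \<theta> t \<le> max \<theta> (1-\<theta>)"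
      unfolding vv_def by (auto simp: algebra_simps)
  qed
  then show ?thesis using h by auto
qed

lemma PP_range:
  assumes "0 < \<theta>" "\<theta> < 1" "0 \<le> w" "w \<le> 1" "0 \<le> a" "a \<le> 1" "0 \<le> b" "b \<le> 1"
  shows "0 < PP \<theta> w a b \<and> PP \<theta> w a b < 1"
proof -
  have A: "0 < vv \<theta> a" "vv \<theta> a < 1" "0 < vv \<theta> b" "vv \<theta> b < 1" using vv_range assms by auto
  have "(1-w) * vv \<theta> a \<le> (1-w)" "w * vv \<theta> b \<le> w" using A assms
    by (auto intro!: mult_left_le)
  moreover have "(1-w) * vv \<theta> a + w * vv \<theta> b > 0" using A assms
    by (cases "w = 0") (auto intro!: add_nonneg_pos)
  moreover have "(1-w) * vv \<theta> a + w * vv \<theta> b < 1"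
  proof (cases "w = 0")
    case True then show ?thesis using A by simp
  next
    case False
    then have "w * vv \<theta> b < w" using A assms by simp
    moreover have "(1-w) * vv \<theta> a \<le> 1 - w" using A assms by (auto intro!: mult_left_le)
    ultimately show ?thesis by simp
  qed
  ultimately show ?thesis unfolding PP_def by simp
qed

lemma GG_sym: "GG \<alpha> p r = GG \<alpha> (1-p) (1-r)"
  unfolding GG_def by simp

lemma cube:
  assumes a: "\<alpha> \<ge> 1" and th: "0 < \<theta>" "\<theta> < 1" and w: "0 \<le> w" "w \<le> 1"
    and abc: "0 \<le> a" "a \<le> 1" "0 \<le> b" "b \<le> 1" "0 \<le> c" "c \<le> 1"
  shows "GG \<alpha> (PP \<theta> w a b) (PP \<theta> w a c) \<le>
     max (GG \<alpha> \<theta> ((1-w)*\<theta> + w*(1-\<theta>))) (GG \<alpha> ((1-w)*\<theta> + w*(1-\<theta>)) \<theta>)"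
    (is "_ \<le> ?R")
proof -
  have rng: "\<And>a b. 0 \<le> a \<Longrightarrow> a \<le> 1 \<Longrightarrow> 0 \<le> b \<Longrightarrow> b \<le> 1 \<Longrightarrow> 0 < PP \<theta> w a b \<and> PP \<theta> w a b < 1"
    using PP_range th w by blast
  have s: "0 < (1-w)*\<theta> + w*(1-\<theta>)" "(1-w)*\<theta> + w*(1-\<theta>) < 1"
    using rng[of 0 1] unfolding PP_def vv_def by auto
  let ?s = "(1-w)*\<theta> + w*(1-\<theta>)"
  have e00: "PP \<theta> w 0 0 = \<theta>" and e01: "PP \<theta> w 0 1 = ?s" and e10: "PP \<theta> w 1 0 = 1 - ?s"
    and e11: "PP \<theta> w 1 1 = 1 - \<theta>" unfolding PP_def vv_def by (simp_all add: algebra_simps)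
  have R1: "1 \<le> ?R" using GG_ge1[OF a th s] by simp
  have V: "GG \<alpha> (PP \<theta> w a b) (PP \<theta> w a c) \<le> ?R" if va: "a \<in> {0,1}" "b \<in> {0,1}" "c \<in> {0,1}" for a b c
  proof (cases "b = c")
    case True
    have "0 \<le> a" "a \<le> 1" "0 \<le> b" "b \<le> 1" using va by auto
    then have "GG \<alpha> (PP \<theta> w a b) (PP \<theta> w a c) = 1" using GG_diag rng True by simp
    then show ?thesis using R1 by simp
  next
    case False
    then consider "a = 0" "b = 0" "c = 1" | "a = 0" "b = 1" "c = 0" | "a = 1" "b = 0" "c = 1" | "a = 1" "b = 1" "c = 0"
      using va by auto
    then show ?thesis
    proof cases
      case 1 then show ?thesis using e00 e01 by simp
    next
      case 2 then show ?thesis using e00 e01 by simp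
    next
      case 3 then show ?thesis using e10 e11 GG_sym[of \<alpha> "1 - ?s" "1 - \<theta>"] by simp
    next
      case 4 then show ?thesis using e10 e11 GG_sym[of \<alpha> "1 - \<theta>" "1 - ?s"] by simp
    qed
  qed
  have S2: "GG \<alpha> (PP \<theta> w a b) (PP \<theta> w a c) \<le> ?R" if "a \<in> {0,1}" "b \<in> {0,1}" "0 \<le> c" "c \<le> 1" for a b c
  proof -
    have ab: "0 \<le> a" "a \<le> 1" "0 \<le> b" "b \<le> 1" using that by auto
    have "GG \<alpha> (PP \<theta> w a b) (PP \<theta> w a c) = GG \<alpha> ((1-c) * PP \<theta> w a b + c * PP \<theta> w a b) ((1-c) * PP \<theta> w a 0 + c * PP \<theta> w a 1)"
      by (rule arg_cong2[OF const_lin PP_lin2])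
    also have "\<dots> \<le> max (GG \<alpha> (PP \<theta> w a b) (PP \<theta> w a 0)) (GG \<alpha> (PP \<theta> w a b) (PP \<theta> w a 1))"
      using GG_line[OF a _ _ _ _ _ _ _ _ that(3,4)] rng ab by simp
    also have "\<dots> \<le> ?R" using V that by simp
    finally show ?thesis .
  qed
  have S3: "GG \<alpha> (PP \<theta> w a b) (PP \<theta> w a c) \<le> ?R" if "a \<in> {0,1}" "0 \<le> b" "b \<le> 1" "0 \<le> c" "c \<le> 1" for a b c
  proof -
    have ab: "0 \<le> a" "a \<le> 1" using that by auto
    have "GG \<alpha> (PP \<theta> w a b) (PP \<theta> w a c) = GG \<alpha> ((1-b) * PP \<theta> w a 0 + b * PP \<theta> w a 1) ((1-b) * PP \<theta> w a c + b * PP \<theta> w a c)"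
      by (rule arg_cong2[OF PP_lin2 const_lin])
    also have "\<dots> \<le> max (GG \<alpha> (PP \<theta> w a 0) (PP \<theta> w a c)) (GG \<alpha> (PP \<theta> w a 1) (PP \<theta> w a c))"
      using GG_line[OF a _ _ _ _ _ _ _ _ that(2,3)] rng ab that by simp
    also have "\<dots> \<le> ?R" using S2 that by simp
    finally show ?thesis .
  qed
  have "GG \<alpha> (PP \<theta> w a b) (PP \<theta> w a c) = GG \<alpha> ((1-a) * PP \<theta> w 0 b + a * PP \<theta> w 1 b) ((1-a) * PP \<theta> w 0 c + a * PP \<theta> w 1 c)"
    by (rule arg_cong2[OF PP_lin1 PP_lin1])
  also have "\<dots> \<le> max (GG \<alpha> (PP \<theta> w 0 b) (PP \<theta> w 0 c)) (GG \<alpha> (PP \<theta> w 1 b) (PP \<theta> w 1 c))"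
    using GG_line[OF a _ _ _ _ _ _ _ _ abc(1,2)] rng abc by simp
  also have "\<dots> \<le> ?R" using S3 abc by simp
  finally show ?thesis .
qed


definition tt :: "('a set \<Rightarrow> int) \<Rightarrow> 'a set \<Rightarrow> real" where
  "tt h y = (if h y = 1 then 0 else 1)"

definition AA :: "nat \<Rightarrow> ('a set \<Rightarrow> int) \<Rightarrow> 'a set \<Rightarrow> real" where
  "AA q h S = (\<Sum>y\<in>batches q S. tt h y) / real (card S choose q)"

lemma tt_range: "0 \<le> tt h y" "tt h y \<le> 1" unfolding tt_def by auto

lemma batches_finite: "finite x \<Longrightarrow> finite (batches q x)"
  unfolding batches_def by (rule finite_subset[of _ "Pow x"]) auto

lemma card_batches: "finite x \<Longrightarrow> card (batches q x) = card x choose q"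
  unfolding batches_def by (rule n_subsets)

lemma avg_range:
  assumes "finite B" "\<And>y. y \<in> B \<Longrightarrow> 0 \<le> f y \<and> f y \<le> (1::real)"
  shows "0 \<le> (\<Sum>y\<in>B. f y) / real (card B)" "(\<Sum>y\<in>B. f y) / real (card B) \<le> 1"
proof -
  have "0 \<le> (\<Sum>y\<in>B. f y)" using assms by (simp add: sum_nonneg)
  then show "0 \<le> (\<Sum>y\<in>B. f y) / real (card B)" by simp
  have "(\<Sum>y\<in>B. f y) \<le> (\<Sum>y\<in>B. 1)" using assms by (intro sum_mono) auto
  then show "(\<Sum>y\<in>B. f y) / real (card B) \<le> 1"
    by (cases "card B = 0") (auto simp: divide_le_eq_1)
qed

lemma AA_range: "finite S \<Longrightarrow> 0 \<le> AA q h S \<and> AA q h S \<le> 1"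
  using avg_range[of "batches q S" "tt h"] tt_range batches_finite[of S q] card_batches[of S q]
  unfolding AA_def by auto

lemma rr1: "h y \<in> {0,1} \<Longrightarrow> rr_pmf \<theta> h y 1 = vv \<theta> (tt h y)"
  unfolding rr_pmf_def vv_def tt_def by auto
lemma rr0: "h y \<in> {0,1} \<Longrightarrow> rr_pmf \<theta> h y 0 = 1 - vv \<theta> (tt h y)"
  unfolding rr_pmf_def vv_def tt_def by auto

lemma vv_alt: "\<theta> + (1 - 2*\<theta>) * X = vv \<theta> X"
  unfolding vv_def by (simp add: algebra_simps)

lemma PP_vv: "PP \<theta> w a b = vv \<theta> ((1-w)*a + w*b)"
  unfolding PP_def vv_def by (simp add: algebra_simps)

lemma mix_rep:
  assumes h01: "\<And>y. h y \<in> {0, 1}" and fin: "finite x" and Nx: "card x = N" and Nq: "N > q"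
    and a0: "a0 \<in> x"
  shows "\<exists>b. 0 \<le> b \<and> b \<le> 1 \<and>
     mix_pmf q \<theta> h x 1 = PP \<theta> (real q / real N) (AA q h (x - {a0})) b \<and>
     mix_pmf q \<theta> h x 0 = 1 - PP \<theta> (real q / real N) (AA q h (x - {a0})) b"
proof -
  define C where "C = card x choose q"
  define S where "S = x - {a0}"
  define B0 where "B0 = batches q S"
  define B1 where "B1 = {y \<in> batches q x. a0 \<in> y}"
  have finS: "finite S" using fin S_def by simp
  have cS: "card S = N - 1" using fin a0 Nx S_def by simp
  have Cpos: "C > 0" unfolding C_def using Nx Nq by simp
  have split: "batches q x = B0 \<union> B1" "B0 \<inter> B1 = {}"
    unfolding B0_def B1_def batches_def S_def by auto
  have finB: "finite B0" "finite B1" using batches_finite[OF fin, of q] split by auto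
  have cB: "card (batches q x) = C" unfolding C_def using card_batches[OF fin] .
  define C0 where "C0 = card S choose q"
  have cB0: "card B0 = C0" unfolding B0_def C0_def using card_batches[OF finS] .
  define c1 where "c1 = card B1"
  have Csum: "C = C0 + c1" using card_Un_disjoint[OF finB split(2)] split(1) cB cB0 c1_def by simp
  have Nc1: "N * c1 = q * C"
  proof (cases q)
    case 0
    then show ?thesis using Csum by (simp add: C_def C0_def)
  next
    case (Suc k)
    have N1: "N = Suc (N - 1)" using Nq by simp
    have pas: "C = C0 + ((N-1) choose k)" unfolding C_def C0_def cS Nx Suc
      by (subst N1) simp
    have "q * C = N * ((N-1) choose (q-1))" unfolding C_def Nx using Suc
      times_binomial_minus1_eq[of q N] by simp
    then show ?thesis using pas Csum Suc by simp
  qed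
  define T0 where "T0 = (\<Sum>y\<in>B0. tt h y)"
  define T1 where "T1 = (\<Sum>y\<in>B1. tt h y)"
  define b where "b = (if c1 = 0 then 0 else T1 / real c1)"
  have T1b: "T1 = real c1 * b"
  proof (cases "c1 = 0")
    case True
    then have "B1 = {}" using finB c1_def by simp
    then show ?thesis using True T1_def b_def by simp
  qed (simp add: b_def)
  have C0pos: "C0 > 0" unfolding C0_def cS using Nq by simp
  have T0A: "T0 = real C0 * AA q h S" unfolding AA_def T0_def B0_def C0_def[symmetric]
    using C0pos by simp
  have brange: "0 \<le> b" "b \<le> 1"
  proof -
    have "\<And>y. y \<in> B1 \<Longrightarrow> 0 \<le> tt h y \<and> tt h y \<le> 1" using tt_range by auto
    from avg_range[OF finB(2), of "tt h", OF this]
    show "0 \<le> b" "b \<le> 1" unfolding b_def T1_def c1_def by auto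
  qed
  have mix1: "mix_pmf q \<theta> h x 1 = (\<Sum>y\<in>batches q x. vv \<theta> (tt h y)) / real C"
    unfolding mix_pmf_def subsample_def C_def
    by (simp add: rr1[OF h01] sum_divide_distrib)
  have mix0: "mix_pmf q \<theta> h x 0 = (\<Sum>y\<in>batches q x. 1 - vv \<theta> (tt h y)) / real C"
    unfolding mix_pmf_def subsample_def C_def
    by (simp add: rr0[OF h01] sum_divide_distrib)
  have sv: "(\<Sum>y\<in>batches q x. vv \<theta> (tt h y)) = real C * \<theta> + (1 - 2*\<theta>) * (T0 + T1)"
  proof -
    have "(\<Sum>y\<in>batches q x. vv \<theta> (tt h y)) = (\<Sum>y\<in>batches q x. \<theta> + (1 - 2*\<theta>) * tt h y)"
      unfolding vv_def by (simp add: algebra_simps)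
    also have "\<dots> = real C * \<theta> + (1 - 2*\<theta>) * (\<Sum>y\<in>batches q x. tt h y)"
      by (simp add: sum.distrib sum_distrib_left[symmetric] cB)
    also have "(\<Sum>y\<in>batches q x. tt h y) = T0 + T1"
      unfolding T0_def T1_def split(1) using sum.union_disjoint[OF finB split(2)] by simp
    finally show ?thesis .
  qed
  have s1: "(\<Sum>y\<in>batches q x. 1 - vv \<theta> (tt h y)) = real C - (\<Sum>y\<in>batches q x. vv \<theta> (tt h y))"
    by (simp add: sum_subtractf cB)
  have key: "(T0 + T1) / real C = (1 - real q / real N) * AA q h S + (real q / real N) * b"
  proof -
    have Npos: "real N > 0" using Nq by simp
    have w: "real q / real N = real c1 / real C" using Nc1 Npos Cpos
      by (simp add: field_simps) (metis of_nat_mult mult.commute)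
    have "real C0 / real C = (real C - real c1)/real C" using Csum by simp
    also have "\<dots> = 1 - real c1 / real C" using Cpos by (simp add: diff_divide_distrib)
    finally have e1: "(1 - real c1 / real C) = real C0 / real C" by simp
    show ?thesis unfolding w e1 T0A T1b by (simp add: add_divide_distrib)
  qed
  have P1: "mix_pmf q \<theta> h x 1 = PP \<theta> (real q / real N) (AA q h S) b"
  proof -
    have "mix_pmf q \<theta> h x 1 = \<theta> + (1 - 2*\<theta>) * ((T0 + T1) / real C)"
      unfolding mix1 sv using Cpos by (simp add: field_simps)
    also have "\<dots> = vv \<theta> ((T0 + T1) / real C)"
      by (rule vv_alt)
    finally show ?thesis unfolding PP_vv key .
  qed
  have P0: "mix_pmf q \<theta> h x 0 = 1 - mix_pmf q \<theta> h x 1"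
    unfolding mix0 mix1 s1 using Cpos by (simp add: field_simps)
  show ?thesis using P1 P0 brange S_def by auto
qed


lemma Lambda_eval: "Lambda \<alpha> P Q = renyi_term \<alpha> (P 0) (Q 0) + renyi_term \<alpha> (P 1) (Q 1)"
  unfolding Lambda_def by simp

lemma Lambda_GG:
  assumes "0 < p" "p < 1" "0 < r" "r < 1" "P 0 = 1 - p" "P 1 = p" "Q 0 = 1 - r" "Q 1 = r"
  shows "Lambda \<alpha> P Q = ereal (GG \<alpha> p r)"
  unfolding Lambda_eval GG_def phi_def renyi_term_def using assms by simp

lemma Lambda_diag:
  assumes "0 \<le> p" "p \<le> 1" "P 0 = 1 - p" "P 1 = p"
  shows "Lambda \<alpha> P P = 1"
proof -
  have r: "renyi_term \<alpha> u u = ereal u" if "u \<ge> 0" for u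
    using that unfolding renyi_term_def by (auto simp: powr_add[symmetric])
  show ?thesis unfolding Lambda_eval using assms r[of p] r[of "1-p"] by (simp add: one_ereal_def)
qed

theorem mainTheorem13:
  fixes h :: "'a set \<Rightarrow> int" and \<theta> \<alpha> :: real and q N :: nat and x x' :: "'a set"
  assumes h01: "\<And>y. h y \<in> {0, 1}"
    and \<theta>: "0 \<le> \<theta>" "\<theta> \<le> 1"
    and \<alpha>: "\<alpha> > 1"
    and fin: "finite x" and finx': "finite x'"
    and Nx: "card x = N" and Nq: "N > q"
    and nb: "subst_rel x x'"
  shows "Lambda \<alpha> (mix_pmf q \<theta> h x) (mix_pmf q \<theta> h x') \<le>
    (let w = real q / real N in
     Max ((\<lambda>\<tau>. Lambda \<alpha> (\<lambda>z. (1 - w) * Bern \<theta> z + w * Bern \<tau> z)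
                        (\<lambda>z. (1 - w) * Bern \<theta> z + w * Bern (1 - \<tau>) z)) ` {\<theta>, 1 - \<theta>}))"
proof -
  obtain a a' where aa: "a \<in> x" "a' \<notin> x" "x' = (x - {a}) \<union> {a'}"
    using nb unfolding subst_rel_def by blast
  have Sx': "x' - {a'} = x - {a}" using aa by auto
  have a'x': "a' \<in> x'" using aa by auto
  have cx': "card x' = N"
  proof -
    have "x' = insert a' (x - {a})" using aa by auto
    then have "card x' = Suc (card (x - {a}))" using fin aa by simp
    then show ?thesis using fin aa Nx Nq by simp
  qed
  define w where "w = real q / real N"
  define A where "A = AA q h (x - {a})"
  have exb: "\<exists>b. 0 \<le> b \<and> b \<le> 1 \<and> mix_pmf q \<theta> h x 1 = PP \<theta> w A b \<and>
     mix_pmf q \<theta> h x 0 = 1 - PP \<theta> w A b"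
    unfolding w_def A_def by (rule mix_rep[OF h01 fin Nx Nq aa(1)])
  then obtain b where bc: "0 \<le> b \<and> b \<le> 1 \<and> mix_pmf q \<theta> h x 1 = PP \<theta> w A b \<and>
     mix_pmf q \<theta> h x 0 = 1 - PP \<theta> w A b" ..
  then have b: "0 \<le> b" "b \<le> 1" "mix_pmf q \<theta> h x 1 = PP \<theta> w A b"
     "mix_pmf q \<theta> h x 0 = 1 - PP \<theta> w A b" by simp_all
  have exb': "\<exists>b. 0 \<le> b \<and> b \<le> 1 \<and> mix_pmf q \<theta> h x' 1 = PP \<theta> w A b \<and>
     mix_pmf q \<theta> h x' 0 = 1 - PP \<theta> w A b"
    using mix_rep[OF h01 finx' cx' Nq a'x'] unfolding w_def A_def Sx' .
  then obtain b' where bc': "0 \<le> b' \<and> b' \<le> 1 \<and> mix_pmf q \<theta> h x' 1 = PP \<theta> w A b' \<and>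
     mix_pmf q \<theta> h x' 0 = 1 - PP \<theta> w A b'" ..
  then have b': "0 \<le> b'" "b' \<le> 1" "mix_pmf q \<theta> h x' 1 = PP \<theta> w A b'"
     "mix_pmf q \<theta> h x' 0 = 1 - PP \<theta> w A b'" by simp_all
  have Ar: "0 \<le> A" "A \<le> 1" using AA_range[of "x - {a}" q h] fin unfolding A_def by auto
  have w01: "0 \<le> w" "w < 1" unfolding w_def using Nq by auto
  define F where "F = (\<lambda>\<tau>. Lambda \<alpha> (\<lambda>z. (1 - w) * Bern \<theta> z + w * Bern \<tau> z)
                        (\<lambda>z. (1 - w) * Bern \<theta> z + w * Bern (1 - \<tau>) z))"
  have Mge: "F \<theta> \<le> Max (F ` {\<theta>, 1 - \<theta>})" "F (1 - \<theta>) \<le> Max (F ` {\<theta>, 1 - \<theta>})"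
    by (intro Max_ge; simp)+
  define P where "P = PP \<theta> w A b"
  define P' where "P' = PP \<theta> w A b'"
  have goal: "Lambda \<alpha> (mix_pmf q \<theta> h x) (mix_pmf q \<theta> h x') \<le> Max (F ` {\<theta>, 1 - \<theta>})"
  proof (cases "q = 0")
    case True
    then have w0: "w = 0" unfolding w_def by simp
    have PP0: "P = vv \<theta> A" "P' = vv \<theta> A" unfolding P_def P'_def w0 PP_def by simp_all
    have vr: "0 \<le> vv \<theta> A" "vv \<theta> A \<le> 1" unfolding vv_def using \<theta> Ar
    proof -
      have "(1-A)*\<theta> \<le> (1-A)" "A*(1-\<theta>) \<le> A" using \<theta> Ar by (auto intro: mult_left_le)
      then show "0 \<le> (1-A)*\<theta> + A*(1-\<theta>)" "(1-A)*\<theta> + A*(1-\<theta>) \<le> 1" using \<theta> Ar by auto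
    qed
    have "Lambda \<alpha> (mix_pmf q \<theta> h x) (mix_pmf q \<theta> h x') = 1"
    proof -
      have e: "mix_pmf q \<theta> h x' 0 = mix_pmf q \<theta> h x 0" "mix_pmf q \<theta> h x' 1 = mix_pmf q \<theta> h x 1"
        using b b' PP0 unfolding P_def P'_def by auto
      have "Lambda \<alpha> (mix_pmf q \<theta> h x) (mix_pmf q \<theta> h x') = Lambda \<alpha> (mix_pmf q \<theta> h x) (mix_pmf q \<theta> h x)"
        unfolding Lambda_eval e ..
      also have "\<dots> = 1" using Lambda_diag[OF vr] b PP0 unfolding P_def by simp
      finally show ?thesis .
    qed
    moreover have "F \<theta> = 1"
    proof -
      have e: "(\<lambda>z::int. (1 - 0) * Bern \<theta> z + 0 * Bern \<tau> z) = Bern \<theta>" for \<tau> by simp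
      have "F \<theta> = Lambda \<alpha> (Bern \<theta>) (Bern \<theta>)" unfolding F_def w0 e ..
      also have "\<dots> = 1" by (rule Lambda_diag[OF \<theta>]) (simp_all add: Bern_def)
      finally show ?thesis .
    qed
    ultimately show ?thesis using Mge by simp
  next
    case False
    then have wpos: "w > 0" unfolding w_def using Nq by simp
    show ?thesis
    proof (cases "0 < \<theta> \<and> \<theta> < 1")
      case True
      then have th: "0 < \<theta>" "\<theta> < 1" by auto
      have Pr: "0 < P" "P < 1" "0 < P'" "P' < 1"
        using PP_range[OF th w01(1) _ Ar b(1,2)] PP_range[OF th w01(1) _ Ar b'(1,2)] w01
        unfolding P_def P'_def by auto
      let ?s = "(1-w)*\<theta> + w*(1-\<theta>)"
      have s: "0 < ?s" "?s < 1" using PP_range[OF th w01(1) _, of 0 1] w01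
        unfolding PP_def vv_def by auto
      have L: "Lambda \<alpha> (mix_pmf q \<theta> h x) (mix_pmf q \<theta> h x') = ereal (GG \<alpha> P P')"
        by (rule Lambda_GG[OF Pr]) (use b b' P_def P'_def in auto)
      have C: "GG \<alpha> P P' \<le> max (GG \<alpha> \<theta> ?s) (GG \<alpha> ?s \<theta>)"
        unfolding P_def P'_def using cube[of \<alpha> \<theta> w A b b'] \<alpha> th w01 Ar b b' by simp
      have F1: "F \<theta> = ereal (GG \<alpha> \<theta> ?s)" unfolding F_def
        by (rule Lambda_GG[OF th s]) (simp_all add: Bern_def algebra_simps)
      have F2: "F (1 - \<theta>) = ereal (GG \<alpha> ?s \<theta>)" unfolding F_def
        by (rule Lambda_GG[OF s th]) (simp_all add: Bern_def algebra_simps)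
      show ?thesis
      proof (cases "GG \<alpha> \<theta> ?s \<le> GG \<alpha> ?s \<theta>")
        case True
        then have "Lambda \<alpha> (mix_pmf q \<theta> h x) (mix_pmf q \<theta> h x') \<le> F (1 - \<theta>)"
          unfolding L F2 using C by simp
        then show ?thesis using Mge(2) by (rule order_trans)
      next
        case False
        then have "Lambda \<alpha> (mix_pmf q \<theta> h x) (mix_pmf q \<theta> h x') \<le> F \<theta>"
          unfolding L F1 using C by simp
        then show ?thesis using Mge(1) by (rule order_trans)
      qed
    next
      case False
      then have "\<theta> = 0 \<or> \<theta> = 1" using \<theta> by auto
      then have "F (1 - \<theta>) = \<infinity>"
      proof
        assume t: "\<theta> = 0"
        show ?thesis unfolding F_def Lambda_eval t renyi_term_def using wpos w01
          by (simp add: Bern_def)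
      next
        assume t: "\<theta> = 1"
        show ?thesis unfolding F_def Lambda_eval t renyi_term_def using wpos w01
          by (simp add: Bern_def)
      qed
      then have "Max (F ` {\<theta>, 1 - \<theta>}) = \<infinity>" using Mge(2) by simp
      then show ?thesis by simp
    qed
  qed
  then show ?thesis unfolding Let_def F_def w_def .
qed

end
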